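(* Let $X$ be a vertex-weighted simplicial complex on $n$ vertices, fix $k$, and let $U^{up}$ be a $\Pi^\pm_k$-projected $(1,\alpha,0)$-unitary encoding of $\Pi^\pm_kP^{up}\Pi^\pm_k$, i.e. $(\Pi^\pm_k\otimes\langle0^\alpha|)U^{up}(\Pi^\pm_k\otimes|0^\alpha\rangle)=\Pi^\pm_kP^{up}\Pi^\pm_k$. Let $V^{up}=((I_n\otimes HZ\otimes I)\otimes I_\alpha)U^{up}$, where $HZ$ (the product of the Hadamard and Pauli-$Z$ matrices) acts on qubit $n+1$. Then $(\Pi_k\otimes\langle0^\alpha|)V^{up}(\Pi_k\otimes|0^\alpha\rangle)=\frac{\Delta^{up}_k}{K^{up}\sqrt2}$.
   Context: Vertices $V=\{1,\dots,n\}$ with weights $w:V\to(0,\infty)$. $X$ is a family of nonempty subsets of $V$ closed under nonempty subsets; $X_k$ = $k$-simplices (size $k+1$), identified with Hamming-weight-$(k+1)$ strings $x_\sigma\in\{0,1\}^n$. Oriented $k$-simplex: ordering $[v_0,\dots,v_k]$ up to even permutations, positive if an even permutation of the increasing order. $X^\pm_k=X^+_k\cup X^-_k$, $\overline\sigma$ opposite orientation, $\sigma_+$ the positive one of $\sigma,\overline\sigma$. $[v_0,\dots,v_k]$ induces on a coface $\sigma\cup\{u\}$ the orientation $[u,v_0,\dots,v_k]$. For oriented $\sigma,\sigma'$ with distinct underlying simplices, $\sigma\sim_\uparrow\sigma'$ if their union is a $(k+1)$-simplex of $X$ on which they induce the same orientation; $v_\sigma$ ($v_{\sigma'}$) is the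 vertex of $\sigma$ not in $\sigma'$ (vice versa); $\mathrm{up}(\sigma)=\{u:\sigma\cup\{u\}\in X_{k+1}\}$. $\Delta^{up}_k$ is the matrix indexed by $X^+_k$ with $(\Delta^{up}_k)_{\sigma\sigma}=\sum_{u\in\mathrm{up}(\sigma)}w(u)^2$, $(\Delta^{up}_k)_{\sigma\sigma'}=w(v_\sigma)w(v_{\sigma'})$ if $\sigma\sim_\uparrow\sigma'$, $-w(v_\sigma)w(v_{\sigma'})$ if $\sigma\sim_\uparrow\overline{\sigma'}$, $0$ otherwise. $\Theta$ is an absorbing state, $S_k=X^\pm_k\cup\{\Theta\}$; $|\sigma\rangle$ is the $(n+2)$-qubit basis state $|x_\sigma\rangle|00\rangle$ ($\sigma\in X^+_k$), $|x_\sigma\rangle|10\rangle$ ($\sigma\in X^-_k$), $|0^n\rangle|01\rangle$ ($\Theta$). $\Pi_k$, $\Pi^\pm_k$ project onto $\mathrm{span}\{|\sigma\rangle\}$ over $X^+_k$, $X^\pm_k$; matrices indexed by $X^+_k$ or $S_k$ act on these spans in this basis and as $0$ elsewhere. A unitary $U$ is a $\Pi_s$-projected $(a,\alpha,\epsilon)$-unitary encoding of $A$ if $\|A-a(\Pi_s\otimes\langle0^\alpha|)U(\Pi_s\otimes|0^\alpha\rangle)\|\le\epsilon$. For $\sigma\in X^\pm_k$: $i(\sigma)$ = position of the $i$-th $0$ of $x_\sigma$, $\tilde j(\tau)$ = position of the $j$-th $1$ of $x_\tau$; $\sigma^\uparrow(i)=\sigma\cup\{i(\sigma)\}$. $K^{up}=\max_{\sigma\in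 X^\pm_k}\sum_{i\in[n-k-1],j\in[k+2]}w(i(\sigma))w(\tilde j(\sigma^\uparrow(i)))$; $\eta^{up}_\sigma=1-\frac1{K^{up}}\sum_{\sigma'\in X^+_k}|(\Delta^{up}_k)_{\sigma'\sigma_+}|$. $P^{up}$ on $S_k$: for $\sigma,\sigma'\in X^\pm_k$, $P^{up}_{\sigma\sigma}=\sum_{u\in\mathrm{up}(\sigma)}w(u)^2/K^{up}$, $P^{up}_{\sigma\sigma'}=w(v_\sigma)w(v_{\sigma'})/K^{up}$ if $\sigma\sim_\uparrow\sigma'$, $P^{up}_{\sigma\Theta}=\eta^{up}_\sigma$, $P^{up}_{\Theta\Theta}=1$, all other entries $0$. *)

theory Defs
  imports Complex_Main "HOL-Combinatorics.Permutations"
begin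

definition simplicial_complex :: "nat \<Rightarrow> nat set set \<Rightarrow> bool" where
  "simplicial_complex n X \<longleftrightarrow>
     (\<forall>S\<in>X. S \<noteq> {} \<and> S \<subseteq> {1..n}) \<and> (\<forall>S\<in>X. \<forall>T. T \<subseteq> S \<and> T \<noteq> {} \<longrightarrow> T \<in> X)"

definition ordering_pos :: "nat list \<Rightarrow> bool" where
  "ordering_pos vs \<longleftrightarrow> (\<exists>p. p permutes {..<length vs} \<and> evenperm p \<and>
      vs = map (\<lambda>i. sorted_list_of_set (set vs) ! p i) [0..<length vs])"

text \<open>Oriented simplex: pair (underlying simplex, sign), sign True = positive orientation.\<close>
type_synonym osimplex = "nat set \<times> bool"

definition Xk :: "nat set set \<Rightarrow> nat \<Rightarrow> nat set set" where
  "Xk X k = {S \<in> X. card S = k + 1}"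

definition Xpm :: "nat set set \<Rightarrow> nat \<Rightarrow> osimplex set" where
  "Xpm X k = {(S, s). S \<in> Xk X k}"

definition Xplus :: "nat set set \<Rightarrow> nat \<Rightarrow> osimplex set" where
  "Xplus X k = {(S, s). S \<in> Xk X k \<and> s}"

definition Xminus :: "nat set set \<Rightarrow> nat \<Rightarrow> osimplex set" where
  "Xminus X k = {(S, s). S \<in> Xk X k \<and> \<not> s}"

definition opp :: "osimplex \<Rightarrow> osimplex" where
  "opp \<sigma> = (fst \<sigma>, \<not> snd \<sigma>)"

definition pos_of :: "osimplex \<Rightarrow> osimplex" where
  "pos_of \<sigma> = (fst \<sigma>, True)"

text \<open>Orientation induced on the coface \<sigma> \<union> {u}: [v0..vk] induces [u,v0,..,vk].
Using the increasing ordering as representative of the positive orientation.\<close>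
definition induced :: "osimplex \<Rightarrow> nat \<Rightarrow> osimplex" where
  "induced \<sigma> u = (insert u (fst \<sigma>),
      (ordering_pos (u # sorted_list_of_set (fst \<sigma>)) \<longleftrightarrow> snd \<sigma>))"

definition vdiff :: "osimplex \<Rightarrow> osimplex \<Rightarrow> nat" where
  "vdiff \<sigma> \<sigma>' = the_elem (fst \<sigma> - fst \<sigma>')"

definition sim_up :: "nat set set \<Rightarrow> osimplex \<Rightarrow> osimplex \<Rightarrow> bool" where
  "sim_up X \<sigma> \<sigma>' \<longleftrightarrow> fst \<sigma> \<noteq> fst \<sigma>' \<and> fst \<sigma> \<union> fst \<sigma>' \<in> X \<and>
      card (fst \<sigma> \<union> fst \<sigma>') = card (fst \<sigma>) + 1 \<and>
      card (fst \<sigma> \<union> fst \<sigma>') = card (fst \<sigma>') + 1 \<and>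
      induced \<sigma> (vdiff \<sigma>' \<sigma>) = induced \<sigma>' (vdiff \<sigma> \<sigma>')"

definition up :: "nat set set \<Rightarrow> nat set \<Rightarrow> nat set" where
  "up X S = {u. u \<notin> S \<and> insert u S \<in> X}"

definition Delta_up :: "nat set set \<Rightarrow> (nat \<Rightarrow> real) \<Rightarrow> osimplex \<Rightarrow> osimplex \<Rightarrow> real" where
  "Delta_up X w \<sigma> \<sigma>' =
     (if \<sigma> = \<sigma>' then (\<Sum>u\<in>up X (fst \<sigma>). (w u)\<^sup>2)
      else if sim_up X \<sigma> \<sigma>' then w (vdiff \<sigma> \<sigma>') * w (vdiff \<sigma>' \<sigma>)
      else if sim_up X \<sigma> (opp \<sigma>') then - (w (vdiff \<sigma> \<sigma>') * w (vdiff \<sigma>' \<sigma>))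
      else 0)"

text \<open>i(\<sigma>): position of the i-th 0 of x_\<sigma>; j~(\<tau>): position of the j-th 1 of x_\<tau> (1-indexed).\<close>
definition ith_zero :: "nat \<Rightarrow> nat set \<Rightarrow> nat \<Rightarrow> nat" where
  "ith_zero n S i = sorted_list_of_set ({1..n} - S) ! (i - 1)"

definition jth_one :: "nat set \<Rightarrow> nat \<Rightarrow> nat" where
  "jth_one T j = sorted_list_of_set T ! (j - 1)"

definition K_up :: "nat \<Rightarrow> nat set set \<Rightarrow> (nat \<Rightarrow> real) \<Rightarrow> nat \<Rightarrow> real" where
  "K_up n X w k = Max ((\<lambda>\<sigma>. \<Sum>i\<in>{1..n-k-1}. \<Sum>j\<in>{1..k+2}.
        w (ith_zero n (fst \<sigma>) i) * w (jth_one (insert (ith_zero n (fst \<sigma>) i) (fst \<sigma>)) j))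
      ` Xpm X k)"

definition eta_up :: "nat \<Rightarrow> nat set set \<Rightarrow> (nat \<Rightarrow> real) \<Rightarrow> nat \<Rightarrow> osimplex \<Rightarrow> real" where
  "eta_up n X w k \<sigma> = 1 - (\<Sum>\<sigma>'\<in>Xplus X k. \<bar>Delta_up X w \<sigma>' (pos_of \<sigma>)\<bar>) / K_up n X w k"

text \<open>States of S_k: Some \<sigma> for oriented simplices, None for the absorbing state \<Theta>.\<close>
definition P_up :: "nat \<Rightarrow> nat set set \<Rightarrow> (nat \<Rightarrow> real) \<Rightarrow> nat \<Rightarrow> osimplex option \<Rightarrow> osimplex option \<Rightarrow> real" where
  "P_up n X w k a b = (case (a, b) of
      (Some \<sigma>, Some \<sigma>') \<Rightarrow>
         (if \<sigma> = \<sigma>' then (\<Sum>u\<in>up X (fst \<sigma>). (w u)\<^sup>2) / K_up n X w k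
          else if sim_up X \<sigma> \<sigma>' then w (vdiff \<sigma> \<sigma>') * w (vdiff \<sigma>' \<sigma>) / K_up n X w k
          else 0)
    | (Some \<sigma>, None) \<Rightarrow> eta_up n X w k \<sigma>
    | (None, None) \<Rightarrow> 1
    | (None, Some _) \<Rightarrow> 0)"

definition Sk :: "nat set set \<Rightarrow> nat \<Rightarrow> osimplex option set" where
  "Sk X k = Some ` Xpm X k \<union> {None}"

text \<open>A computational basis state of m qubits is a bool list of length m (True = 1);
qubit number j (1-indexed) is the list entry j-1. An operator on m qubits is given by
its matrix entries A x y = <x|A|y> for x, y of length m.\<close>

type_synonym qop = "bool list \<Rightarrow> bool list \<Rightarrow> complex"

definition basis :: "nat \<Rightarrow> bool list set" where
  "basis m = {x. length x = m}"

definition op_mult :: "nat \<Rightarrow> qop \<Rightarrow> qop \<Rightarrow> qop" where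
  "op_mult m A B x y = (\<Sum>z\<in>basis m. A x z * B z y)"

definition op_id :: qop where
  "op_id x y = (if x = y then 1 else 0)"

definition op_adj :: "qop \<Rightarrow> qop" where
  "op_adj A x y = cnj (A y x)"

definition op_eq :: "nat \<Rightarrow> qop \<Rightarrow> qop \<Rightarrow> bool" where
  "op_eq m A B \<longleftrightarrow> (\<forall>x\<in>basis m. \<forall>y\<in>basis m. A x y = B x y)"

definition unitary_op :: "nat \<Rightarrow> qop \<Rightarrow> bool" where
  "unitary_op m U \<longleftrightarrow> op_eq m (op_mult m (op_adj U) U) op_id \<and> op_eq m (op_mult m U (op_adj U)) op_id"

definition proj_op :: "bool list set \<Rightarrow> qop" where
  "proj_op B x y = (if x = y \<and> x \<in> B then 1 else 0)"

definition mat_op :: "('i \<Rightarrow> bool list) \<Rightarrow> 'i set \<Rightarrow> ('i \<Rightarrow> 'i \<Rightarrow> complex) \<Rightarrow> qop" where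
  "mat_op bas I M x y = (\<Sum>s\<in>I. \<Sum>t\<in>I. if bas s = x \<and> bas t = y then M s t else 0)"

text \<open>(\<Pi> \<otimes> <0^\<alpha>|) U (\<Pi> \<otimes> |0^\<alpha>>) as an operator on the first m qubits (ancilla last).\<close>
definition proj_block :: "nat \<Rightarrow> bool list set \<Rightarrow> nat \<Rightarrow> qop \<Rightarrow> qop" where
  "proj_block m B \<alpha> U =
     op_mult m (proj_op B) (op_mult m (\<lambda>x y. U (x @ replicate \<alpha> False) (y @ replicate \<alpha> False)) (proj_op B))"

definition gate_on :: "nat \<Rightarrow> nat \<Rightarrow> (bool \<Rightarrow> bool \<Rightarrow> complex) \<Rightarrow> qop" where
  "gate_on m j G x y = G (x ! (j - 1)) (y ! (j - 1)) *
      (if \<forall>i<m. i \<noteq> j - 1 \<longrightarrow> x ! i = y ! i then 1 else 0)"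

definition hadamard :: "bool \<Rightarrow> bool \<Rightarrow> complex" where
  "hadamard a b = (if a \<and> b then -1 else 1) / complex_of_real (sqrt 2)"

definition pauliZ :: "bool \<Rightarrow> bool \<Rightarrow> complex" where
  "pauliZ a b = (if a = b then (if a then -1 else 1) else 0)"

definition HZ :: "bool \<Rightarrow> bool \<Rightarrow> complex" where
  "HZ a b = (\<Sum>c\<in>UNIV. hadamard a c * pauliZ c b)"

definition xstr :: "nat \<Rightarrow> nat set \<Rightarrow> bool list" where
  "xstr n S = map (\<lambda>v. v \<in> S) [1..<n+1]"

text \<open>|\<sigma>> = |x_\<sigma>>|00> for positive, |x_\<sigma>>|10> for negative orientation; \<Theta> = |0^n>|01>.\<close>
definition ket :: "nat \<Rightarrow> osimplex \<Rightarrow> bool list" where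
  "ket n \<sigma> = xstr n (fst \<sigma>) @ [\<not> snd \<sigma>, False]"

definition ket_S :: "nat \<Rightarrow> osimplex option \<Rightarrow> bool list" where
  "ket_S n a = (case a of Some \<sigma> \<Rightarrow> ket n \<sigma> | None \<Rightarrow> replicate n False @ [False, True])"

definition Pi_k :: "nat \<Rightarrow> nat set set \<Rightarrow> nat \<Rightarrow> bool list set" where
  "Pi_k n X k = ket n ` Xplus X k"

definition Pi_pm :: "nat \<Rightarrow> nat set set \<Rightarrow> nat \<Rightarrow> bool list set" where
  "Pi_pm n X k = ket n ` Xpm X k"

end

theory Submission
  imports Defs
begin

lemma sum_delta_and:
  assumes "finite S" "y \<in> S"
  shows "(\<Sum>z\<in>S. if z = y \<and> P z then f z else 0) = (if P y then f y else 0)"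
proof -
  have "(\<Sum>z\<in>S. if z = y \<and> P z then f z else 0) = (\<Sum>z\<in>S. if z = y then (if P y then f y else 0) else 0)"
    by (intro sum.cong) auto
  then show ?thesis using assms by simp
qed

lemma fin_basis: "finite (basis m)"
  unfolding basis_def using finite_lists_length_eq[of "UNIV::bool set" m] by simp

lemma proj_sandwich:
  assumes "B \<subseteq> basis m" "x \<in> basis m" "y \<in> basis m"
  shows "op_mult m (proj_op B) (op_mult m A (proj_op B)) x y = (if x \<in> B \<and> y \<in> B then A x y else 0)"
proof -
  have in1: "op_mult m A (proj_op B) z y = (if y \<in> B then A z y else 0)" for z
  proof -
    have "op_mult m A (proj_op B) z y = (\<Sum>z'\<in>basis m. if z' = y \<and> z' \<in> B then A z y else 0)"
      unfolding op_mult_def proj_op_def by (intro sum.cong refl) auto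
    also have "\<dots> = (if y \<in> B then A z y else 0)"
      by (rule sum_delta_and[OF fin_basis assms(3)])
    finally show ?thesis .
  qed
  have "op_mult m (proj_op B) (op_mult m A (proj_op B)) x y =
     (\<Sum>z\<in>basis m. if z = x \<and> z \<in> B then (if y \<in> B then A z y else 0) else 0)"
    unfolding op_mult_def[of m "proj_op B"] proj_op_def in1 by (intro sum.cong refl) auto
  also have "\<dots> = (if x \<in> B then (if y \<in> B then A x y else 0) else 0)"
    by (rule sum_delta_and[OF fin_basis assms(2)])
  finally show ?thesis by simp
qed

lemma mat_op_at:
  assumes "finite I" "inj_on bas I" "s \<in> I" "t \<in> I"
  shows "mat_op bas I M (bas s) (bas t) = M s t"
proof -
  have "mat_op bas I M (bas s) (bas t) = (\<Sum>s'\<in>I. \<Sum>t'\<in>I. if s' = s \<and> t' = t then M s' t' else 0)"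
    unfolding mat_op_def
    by (intro sum.cong refl) (use assms in \<open>auto simp: inj_on_eq_iff\<close>)
  also have "\<dots> = M s t"
  proof -
    have "(\<Sum>t'\<in>I. if s' = s \<and> t' = t then M s' t' else 0) = (if s' = s then M s' t else 0)" for s'
      using sum_delta_and[OF assms(1) assms(4), of "\<lambda>_. s' = s" "M s'"]
      by (simp add: conj_commute)
    then show ?thesis using assms by simp
  qed
  finally show ?thesis .
qed

lemma mat_op_out:
  assumes "x \<notin> bas ` I"
  shows "mat_op bas I M x y = 0"
  unfolding mat_op_def using assms by (auto intro!: sum.neutral)

lemma xstr_inj:
  assumes "S \<subseteq> {1..n}" "T \<subseteq> {1..n}" "xstr n S = xstr n T"
  shows "S = T"
proof -
  have "v \<in> S \<longleftrightarrow> v \<in> T" if "v \<in> {1..n}" for v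
  proof -
    have "xstr n S ! (v - 1) = (v \<in> S)" "xstr n T ! (v - 1) = (v \<in> T)"
      using that by (auto simp: xstr_def nth_map simp del: upt_Suc)
    then show ?thesis using assms(3) by simp
  qed
  then show ?thesis using assms by blast
qed

lemma len_xstr[simp]: "length (xstr n S) = n" by (simp add: xstr_def)
lemma len_ket[simp]: "length (ket n \<sigma>) = n + 2" by (simp add: ket_def)

context
  fixes n X
  assumes sc: "simplicial_complex n X"
begin

lemma Xsub: "S \<in> X \<Longrightarrow> S \<subseteq> {1..n}"
  using sc by (auto simp: simplicial_complex_def)

lemma finX: "finite X"
proof -
  have "X \<subseteq> Pow {1..n}" using Xsub by auto
  then show ?thesis by (rule finite_subset) simp
qed

lemma Xpm_eq: "Xpm X k = Xk X k \<times> UNIV" by (auto simp: Xpm_def)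

lemma finXpm: "finite (Xpm X k)"
  unfolding Xpm_eq Xk_def using finX by simp

lemma finXplus: "finite (Xplus X k)"
  by (rule finite_subset[OF _ finXpm]) (auto simp: Xplus_def Xpm_def)

lemma finSk: "finite (Sk X k)" using finXpm by (simp add: Sk_def)

lemma ket_inj: "inj_on (ket n) (Xpm X k)"
proof
  fix a b assume a: "a \<in> Xpm X k" and b: "b \<in> Xpm X k" and e: "ket n a = ket n b"
  then have "xstr n (fst a) = xstr n (fst b)" "snd a = snd b"
    by (auto simp: ket_def)
  moreover have "fst a \<in> X" "fst b \<in> X"
    using a b by (auto simp: Xpm_def Xk_def)
  then have "fst a \<subseteq> {1..n}" "fst b \<subseteq> {1..n}" using Xsub by auto
  ultimately have "fst a = fst b" using xstr_inj by blast
  then show "a = b" using \<open>snd a = snd b\<close> by (simp add: prod.expand)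
qed

lemma ket_inj_plus: "inj_on (ket n) (Xplus X k)"
  by (rule inj_on_subset[OF ket_inj]) (auto simp: Xplus_def Xpm_def)

lemma ketS_inj: "inj_on (ket_S n) (Sk X k)"
proof
  fix a b assume a: "a \<in> Sk X k" and b: "b \<in> Sk X k" and e: "ket_S n a = ket_S n b"
  show "a = b"
  proof (cases a; cases b)
    fix s t assume "a = Some s" "b = Some t"
    then show ?thesis using e a b ket_inj by (auto simp: ket_S_def Sk_def inj_on_def)
  next
    fix s assume "a = Some s" "b = None"
    then show ?thesis using e by (auto simp: ket_S_def ket_def dest: arg_cong[where f=last])
  next
    fix s assume "a = None" "b = Some s"
    then show ?thesis using e by (auto simp: ket_S_def ket_def dest: arg_cong[where f=last])
  qed simp
qed

end

lemma sim_opp: "sim_up X (opp a) b \<longleftrightarrow> sim_up X a (opp b)"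
  unfolding sim_up_def induced_def vdiff_def opp_def by auto

lemma sim_both: "sim_up X a b \<Longrightarrow> sim_up X a (opp b) \<Longrightarrow> False"
  unfolding sim_up_def induced_def vdiff_def opp_def by auto

lemma HZ_FT: "HZ False True = - 1 / complex_of_real (sqrt 2)"
  by (simp add: HZ_def UNIV_bool hadamard_def pauliZ_def)

lemma HZ_FF: "HZ False False = 1 / complex_of_real (sqrt 2)"
  by (simp add: HZ_def UNIV_bool hadamard_def pauliZ_def)

lemma gate_val:
  assumes "length x0 = m" "length z = m" "n < m" "x0 ! n = False"
  shows "gate_on m (n + 1) G x0 z =
     (if z = x0[n := True] then G False True else if z = x0 then G False False else 0)"
proof -
  have c: "(\<forall>i<m. i \<noteq> n \<longrightarrow> x0 ! i = z ! i) \<longleftrightarrow> z = x0[n := z ! n]"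
    using assms by (auto simp: list_eq_iff_nth_eq nth_list_update)
  have id: "x0[n := False] = x0" using list_update_id[of x0 n] assms(4) by simp
  have "x0[n := True] ! n = True" using assms by simp
  then have ne: "x0[n := True] \<noteq> x0" using assms(4) by auto
  show ?thesis
  proof (cases "z ! n")
    case True
    then show ?thesis unfolding gate_on_def using c ne assms(4) by auto
  next
    case False
    then show ?thesis unfolding gate_on_def using c ne id assms(4) by auto
  qed
qed

lemma gate_mult:
  assumes "x0 \<in> basis m" "n < m" "x0 ! n = False"
  shows "op_mult m (gate_on m (n + 1) G) U x0 y0 =
     G False True * U (x0[n := True]) y0 + G False False * U x0 y0"
proof -
  let ?a = "x0[n := True]"
  have "x0[n := True] ! n = True" using assms by (simp add: basis_def)
  then have ne: "?a \<noteq> x0" using assms(3) by auto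
  have ab: "?a \<in> basis m" using assms by (simp add: basis_def)
  have eq: "gate_on m (n + 1) G x0 z * U z y0 = 
     (if z = ?a then G False True * U ?a y0 else 0) + (if z = x0 then G False False * U x0 y0 else 0)"
    if "z \<in> basis m" for z
  proof -
    have G: "gate_on m (n + 1) G x0 z =
       (if z = ?a then G False True else if z = x0 then G False False else 0)"
      using gate_val[of x0 m z n G] assms that by (simp add: basis_def)
    show ?thesis
    proof (cases "z = ?a")
      case True
      then show ?thesis using G ne by simp
    next
      case False
      then show ?thesis using G by (cases "z = x0") simp_all
    qed
  qed
  have "op_mult m (gate_on m (n + 1) G) U x0 y0 =
     (\<Sum>z\<in>basis m. (if z = ?a then G False True * U ?a y0 else 0) + (if z = x0 then G False False * U x0 y0 else 0))"
    unfolding op_mult_def using eq by (rule sum.cong[OF refl])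
  also have "\<dots> = G False True * U ?a y0 + G False False * U x0 y0"
    using assms(1) ab by (simp only: sum.distrib sum.delta fin_basis if_True)
  finally show ?thesis .
qed

lemma Pi_sub: "ket n ` A \<subseteq> basis (n + 2)"
  by (auto simp: basis_def)

theorem proposition3p4:
  fixes n k \<alpha> :: nat and X :: "nat set set" and w :: "nat \<Rightarrow> real" and U :: qop
  assumes "simplicial_complex n X"
    and "\<forall>v\<in>{1..n}. w v > 0"
    and "unitary_op (n + 2 + \<alpha>) U"
    and "op_eq (n + 2) (proj_block (n + 2) (Pi_pm n X k) \<alpha> U)
           (op_mult (n + 2) (proj_op (Pi_pm n X k))
              (op_mult (n + 2) (mat_op (ket_S n) (Sk X k) (\<lambda>a b. complex_of_real (P_up n X w k a b)))
                 (proj_op (Pi_pm n X k))))"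
  shows "op_eq (n + 2)
           (proj_block (n + 2) (Pi_k n X k) \<alpha> (op_mult (n + 2 + \<alpha>) (gate_on (n + 2 + \<alpha>) (n + 1) HZ) U))
           (mat_op (ket n) (Xplus X k)
              (\<lambda>\<sigma> \<sigma>'. complex_of_real (Delta_up X w \<sigma> \<sigma>' / (K_up n X w k * sqrt 2))))"
proof -
  note sc = assms(1)
  let ?r = "replicate \<alpha> False"
  let ?P = "P_up n X w k"
  let ?K = "K_up n X w k"
  have Uval: "U (ket n \<tau> @ ?r) (ket n \<tau>' @ ?r) = complex_of_real (?P (Some \<tau>) (Some \<tau>'))"
    if t: "\<tau> \<in> Xpm X k" "\<tau>' \<in> Xpm X k" for \<tau> \<tau>'
  proof -
    have b: "ket n \<tau> \<in> basis (n + 2)" "ket n \<tau>' \<in> basis (n + 2)" by (auto simp: basis_def)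
    have i: "ket n \<tau> \<in> Pi_pm n X k" "ket n \<tau>' \<in> Pi_pm n X k" using t by (auto simp: Pi_pm_def)
    have S: "Some \<tau> \<in> Sk X k" "Some \<tau>' \<in> Sk X k" using t by (auto simp: Sk_def)
    have e1: "proj_block (n + 2) (Pi_pm n X k) \<alpha> U (ket n \<tau>) (ket n \<tau>') = U (ket n \<tau> @ ?r) (ket n \<tau>' @ ?r)"
      unfolding proj_block_def using proj_sandwich[OF _ b] i Pi_sub[of n "Xpm X k"]
      by (simp add: Pi_pm_def)
    also have "\<dots> = mat_op (ket_S n) (Sk X k) (\<lambda>a b. complex_of_real (?P a b)) (ket n \<tau>) (ket n \<tau>')"
      using assms(4) b unfolding op_eq_def
      using proj_sandwich[OF _ b] i Pi_sub[of n "Xpm X k"] calculation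
      by (simp add: Pi_pm_def)
    also have "\<dots> = mat_op (ket_S n) (Sk X k) (\<lambda>a b. complex_of_real (?P a b)) (ket_S n (Some \<tau>)) (ket_S n (Some \<tau>'))"
      by (simp add: ket_S_def)
    also have "\<dots> = complex_of_real (?P (Some \<tau>) (Some \<tau>'))"
      by (rule mat_op_at[OF finSk[OF sc] ketS_inj[OF sc] S])
    finally show ?thesis using e1 by simp
  qed
  show ?thesis
    unfolding op_eq_def
  proof (intro ballI)
    fix x y assume x: "x \<in> basis (n + 2)" and y: "y \<in> basis (n + 2)"
    have sub: "Pi_k n X k \<subseteq> basis (n + 2)" unfolding Pi_k_def by (rule Pi_sub)
    show "proj_block (n + 2) (Pi_k n X k) \<alpha> (op_mult (n + 2 + \<alpha>) (gate_on (n + 2 + \<alpha>) (n + 1) HZ) U) x y =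
       mat_op (ket n) (Xplus X k) (\<lambda>\<sigma> \<sigma>'. complex_of_real (Delta_up X w \<sigma> \<sigma>' / (?K * sqrt 2))) x y"
    proof (cases "x \<in> Pi_k n X k \<and> y \<in> Pi_k n X k")
      case False
      then have "x \<notin> ket n ` Xplus X k \<or> y \<notin> ket n ` Xplus X k" by (auto simp: Pi_k_def)
      then have "mat_op (ket n) (Xplus X k) (\<lambda>\<sigma> \<sigma>'. complex_of_real (Delta_up X w \<sigma> \<sigma>' / (?K * sqrt 2))) x y = 0"
        unfolding mat_op_def by (auto intro!: sum.neutral)
      then show ?thesis unfolding proj_block_def using proj_sandwich[OF sub x y] False by simp
    next
      case True
      then obtain \<sigma> \<sigma>' where s: "\<sigma> \<in> Xplus X k" "\<sigma>' \<in> Xplus X k" and xy: "x = ket n \<sigma>" "y = ket n \<sigma>'"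
        by (auto simp: Pi_k_def)
      have sp: "\<sigma> \<in> Xpm X k" "\<sigma>' \<in> Xpm X k" "opp \<sigma> \<in> Xpm X k"
        using s by (auto simp: Xplus_def Xpm_def opp_def)
      have pos: "snd \<sigma>" "snd \<sigma>'" using s by (auto simp: Xplus_def)
      have x0b: "ket n \<sigma> @ ?r \<in> basis (n + 2 + \<alpha>)" by (simp add: basis_def)
      have x0n: "(ket n \<sigma> @ ?r) ! n = False" using pos by (simp add: ket_def nth_append)
      have upd: "(ket n \<sigma> @ ?r)[n := True] = ket n (opp \<sigma>) @ ?r"
        using pos by (simp add: ket_def opp_def list_update_append)
      have "proj_block (n + 2) (Pi_k n X k) \<alpha> (op_mult (n + 2 + \<alpha>) (gate_on (n + 2 + \<alpha>) (n + 1) HZ) U) x y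
          = op_mult (n + 2 + \<alpha>) (gate_on (n + 2 + \<alpha>) (n + 1) HZ) U (ket n \<sigma> @ ?r) (ket n \<sigma>' @ ?r)"
        unfolding proj_block_def using proj_sandwich[OF sub x y] True xy by simp
      also have "\<dots> = HZ False True * complex_of_real (?P (Some (opp \<sigma>)) (Some \<sigma>'))
           + HZ False False * complex_of_real (?P (Some \<sigma>) (Some \<sigma>'))"
        using gate_mult[OF x0b _ x0n, of HZ U] upd Uval sp by simp
      also have "\<dots> = complex_of_real ((?P (Some \<sigma>) (Some \<sigma>') - ?P (Some (opp \<sigma>)) (Some \<sigma>')) / sqrt 2)"
        by (simp add: HZ_FT HZ_FF field_simps)
      also have "(?P (Some \<sigma>) (Some \<sigma>') - ?P (Some (opp \<sigma>)) (Some \<sigma>')) = Delta_up X w \<sigma> \<sigma>' / ?K"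
      proof -
        have vd: "vdiff (opp \<sigma>) \<sigma>' = vdiff \<sigma> \<sigma>'" "vdiff \<sigma>' (opp \<sigma>) = vdiff \<sigma>' \<sigma>"
          by (auto simp: vdiff_def opp_def)
        have ne: "opp \<sigma> \<noteq> \<sigma>'" using pos by (auto simp: opp_def)
        have eqs: "\<sigma> = \<sigma>' \<Longrightarrow> \<not> sim_up X (opp \<sigma>) \<sigma>'" by (auto simp: sim_up_def opp_def)
        have "\<sigma> \<noteq> \<sigma>' \<Longrightarrow> fst \<sigma> \<noteq> fst \<sigma>'" using pos by (cases \<sigma>; cases \<sigma>') auto
        show ?thesis
          using vd ne eqs sim_opp[of X \<sigma> \<sigma>'] sim_both[of X \<sigma> \<sigma>']
          by (auto simp: P_up_def Delta_up_def diff_divide_distrib)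
      qed
      also have "complex_of_real (Delta_up X w \<sigma> \<sigma>' / ?K / sqrt 2) =
          mat_op (ket n) (Xplus X k) (\<lambda>\<sigma> \<sigma>'. complex_of_real (Delta_up X w \<sigma> \<sigma>' / (?K * sqrt 2))) x y"
        unfolding xy by (subst mat_op_at[OF finXplus[OF sc] ket_inj_plus[OF sc] s]) simp
      finally show ?thesis .
    qed
  qed
qed

end
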